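(* Let $\boldsymbol{u}^\star\in\mathbb{R}^n$ and $f(\boldsymbol{u})=\frac12\|\boldsymbol{u}\boldsymbol{u}^{\mathrm T}-\boldsymbol{u}^\star{\boldsymbol{u}^\star}^{\mathrm T}\|_1$ on $\mathbb{R}^n$. Then every second-order stationary point of $f$ is a global minimizer of $f$.
   Context: $\|\cdot\|_1$ is the entrywise $\ell_1$-norm. $\partial f$ denotes the subdifferential (Fréchet, limiting and Clarke subdifferentials coincide for this $f$). The second subderivative is $d^2f(\boldsymbol{x};\boldsymbol{v})(\boldsymbol{w})=\liminf_{t\searrow0,\ \boldsymbol{w}'\to\boldsymbol{w}}\frac{f(\boldsymbol{x}+t\boldsymbol{w}')-f(\boldsymbol{x})-t\,\boldsymbol{v}^{\mathrm T}\boldsymbol{w}'}{t^2/2}$. A point $\boldsymbol{x}$ is a second-order stationary point of $f$ if $\boldsymbol{0}\in\partial f(\boldsymbol{x})$ and $d^2f(\boldsymbol{x};\boldsymbol{0})(\boldsymbol{w})\ge0$ for all $\boldsymbol{w}\in\mathbb{R}^n$. *)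

theory Defs
  imports "HOL-Analysis.Analysis"
begin

definition rank1_l1_obj :: "real^'n \<Rightarrow> real^'n \<Rightarrow> real" where
  "rank1_l1_obj ustar u =
     (1/2) * (\<Sum>i\<in>UNIV. \<Sum>j\<in>UNIV. \<bar>u$i * u$j - ustar$i * ustar$j\<bar>)"

definition frechet_subdiff :: "('a::real_inner \<Rightarrow> real) \<Rightarrow> 'a \<Rightarrow> 'a set" where
  "frechet_subdiff f x =
     {v. Liminf (at x) (\<lambda>y. ereal ((f y - f x - inner v (y - x)) / norm (y - x))) \<ge> 0}"

definition second_subderiv :: "('a::real_inner \<Rightarrow> real) \<Rightarrow> 'a \<Rightarrow> 'a \<Rightarrow> 'a \<Rightarrow> ereal" where
  "second_subderiv f x v w =
     Liminf (at_right 0 \<times>\<^sub>F nhds w)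
       (\<lambda>(t, w'). ereal ((f (x + t *\<^sub>R w') - f x - t * inner v w') / (t^2 / 2)))"

definition second_order_stationary :: "('a::real_inner \<Rightarrow> real) \<Rightarrow> 'a \<Rightarrow> bool" where
  "second_order_stationary f x \<longleftrightarrow>
     0 \<in> frechet_subdiff f x \<and> (\<forall>w. second_subderiv f x 0 w \<ge> 0)"

end

theory Submission
  imports Defs
begin


definition al :: "real \<Rightarrow> real \<Rightarrow> real" where
  "al D A = (if D \<noteq> 0 then sgn D * A else \<bar>A\<bar>)"
definition be :: "real \<Rightarrow> real \<Rightarrow> real \<Rightarrow> real" where
  "be D A B = (if D \<noteq> 0 then sgn D * B else if A \<noteq> 0 then sgn A * B else \<bar>B\<bar>)"

lemma expand1:
  fixes D A B :: real
  shows "\<forall>\<^sub>F t in at_right 0. \<bar>D + t*A + t^2*B\<bar> - \<bar>D\<bar> = t * al D A + t^2 * be D A B"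
proof -
  have pos: "\<forall>\<^sub>F t in at_right (0::real). t > 0"
    by (simp add: eventually_at_right_field) (metis zero_less_one)
  have lim1: "((\<lambda>t. D + t*A + t^2*B) \<longlongrightarrow> D) (at_right 0)"
    by (auto intro!: tendsto_eq_intros)
  have lim2: "((\<lambda>t. A + t*B) \<longlongrightarrow> A) (at_right 0)"
    by (auto intro!: tendsto_eq_intros)
  show ?thesis
  proof (cases "D > 0")
    case True
    have "\<forall>\<^sub>F t in at_right 0. D + t*A + t^2*B > 0"
      using order_tendstoD(1)[OF lim1 True] .
    then show ?thesis
      by eventually_elim (use True in \<open>auto simp: al_def be_def\<close>)
  next
    case F1: False
    show ?thesis
    proof (cases "D < 0")
      case True
      have "\<forall>\<^sub>F t in at_right 0. D + t*A + t^2*B < 0"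
        using order_tendstoD(2)[OF lim1 True] .
      then show ?thesis
        by eventually_elim (use True in \<open>auto simp: al_def be_def algebra_simps\<close>)
    next
      case False
      with F1 have D0: "D = 0" by simp
      show ?thesis
      proof (cases "A > 0")
        case True
        have "\<forall>\<^sub>F t in at_right 0. A + t*B > 0"
          using order_tendstoD(1)[OF lim2 True] .
        with pos show ?thesis
        proof eventually_elim
          case (elim t)
          have h1: "t * (A + t*B) > 0" using elim by simp
          have "D + t*A + t^2*B = t * (A + t*B)"
            using D0 by (simp add: power2_eq_square algebra_simps)
          note this h1
          then show ?case using D0 True h1 by (simp add: al_def be_def power2_eq_square algebra_simps)
        qed
      next
        case F2: False
        show ?thesis
        proof (cases "A < 0")
          case True
          have "\<forall>\<^sub>F t in at_right 0. A + t*B < 0"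
            using order_tendstoD(2)[OF lim2 True] .
          with pos show ?thesis
          proof eventually_elim
            case (elim t)
            have h1: "t * (A + t*B) < 0" using elim by (simp add: mult_pos_neg)
            have "D + t*A + t^2*B = t * (A + t*B)"
              using D0 by (simp add: power2_eq_square algebra_simps)
            note this h1
            then show ?case using D0 True h1 by (simp add: al_def be_def power2_eq_square algebra_simps)
          qed
        next
          case False
          with F2 have "A = 0" by simp
          then show ?thesis using D0
            by (simp add: al_def be_def abs_mult)
        qed
      qed
    qed
  qed
qed

definition DD :: "real^'n \<Rightarrow> real^'n \<Rightarrow> 'n \<Rightarrow> 'n \<Rightarrow> real" where
  "DD s u i j = u$i * u$j - s$i * s$j"
definition SA :: "real^'n \<Rightarrow> real^'n \<Rightarrow> real^'n \<Rightarrow> real" where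
  "SA s u w = (\<Sum>i\<in>UNIV. \<Sum>j\<in>UNIV. al (DD s u i j) (u$i * w$j + w$i * u$j))"
definition SB :: "real^'n \<Rightarrow> real^'n \<Rightarrow> real^'n \<Rightarrow> real" where
  "SB s u w = (\<Sum>i\<in>UNIV. \<Sum>j\<in>UNIV. be (DD s u i j) (u$i * w$j + w$i * u$j) (w$i * w$j))"

lemma expand_f:
  fixes s u w :: "real^'n"
  shows "\<forall>\<^sub>F t in at_right 0. rank1_l1_obj s (u + t *\<^sub>R w) - rank1_l1_obj s u
           = (1/2) * (t * SA s u w + t^2 * SB s u w)"
proof -
  have "\<forall>\<^sub>F t in at_right 0. \<forall>i. \<forall>j.
     \<bar>DD s u i j + t*(u$i * w$j + w$i * u$j) + t^2*(w$i * w$j)\<bar> - \<bar>DD s u i j\<bar>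
       = t * al (DD s u i j) (u$i * w$j + w$i * u$j) + t^2 * be (DD s u i j) (u$i * w$j + w$i * u$j) (w$i * w$j)"
    by (intro eventually_all_finite expand1)
  then show ?thesis
  proof eventually_elim
    case (elim t)
    have e: "(u + t *\<^sub>R w)$i * (u + t *\<^sub>R w)$j - s$i * s$j
           = DD s u i j + t*(u$i * w$j + w$i * u$j) + t^2*(w$i * w$j)" for i j
      by (simp add: DD_def power2_eq_square algebra_simps)
    have "rank1_l1_obj s (u + t *\<^sub>R w) - rank1_l1_obj s u
       = (1/2) * (\<Sum>i\<in>UNIV. \<Sum>j\<in>UNIV. \<bar>DD s u i j + t*(u$i * w$j + w$i * u$j) + t^2*(w$i * w$j)\<bar> - \<bar>DD s u i j\<bar>)"
      unfolding rank1_l1_obj_def e by (simp add: DD_def sum_subtractf algebra_simps)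
    also have "\<dots> = (1/2) * (\<Sum>i\<in>UNIV. \<Sum>j\<in>UNIV. t * al (DD s u i j) (u$i * w$j + w$i * u$j) + t^2 * be (DD s u i j) (u$i * w$j + w$i * u$j) (w$i * w$j))"
      using elim by simp
    also have "\<dots> = (1/2) * (t * SA s u w + t^2 * SB s u w)"
      by (simp add: SA_def SB_def sum.distrib sum_distrib_left)
    finally show ?case .
  qed
qed

lemma stat_cond:
  fixes s u w :: "real^'n"
  assumes "second_order_stationary (rank1_l1_obj s) u"
  shows "SA s u w \<ge> 0 \<and> (SA s u w = 0 \<longrightarrow> SB s u w \<ge> 0)"
proof (rule ccontr)
  let ?f = "rank1_l1_obj s"
  let ?a = "SA s u w" and ?b = "SB s u w"
  assume neg: "\<not> ?thesis"
  define e where "e = (if ?a < 0 then 1 else - ?b / 2)"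
  have epos: "e > 0" using neg by (auto simp: e_def)
  have "second_subderiv ?f u 0 w \<ge> 0" using assms by (simp add: second_order_stationary_def)
  then have "\<forall>\<^sub>F p in at_right 0 \<times>\<^sub>F nhds w. ereal (-e) < (\<lambda>(t, w'). ereal ((?f (u + t *\<^sub>R w') - ?f u - t * inner 0 w') / (t^2 / 2))) p"
    unfolding second_subderiv_def le_Liminf_iff using epos by (simp add: zero_ereal_def)
  moreover have "filterlim (\<lambda>t. (t, w)) (at_right 0 \<times>\<^sub>F nhds w) (at_right (0::real))"
    by (intro filterlim_Pair filterlim_ident tendsto_const)
  ultimately have "\<forall>\<^sub>F t in at_right 0. ereal (-e) < (\<lambda>(t, w'). ereal ((?f (u + t *\<^sub>R w') - ?f u - t * inner 0 w') / (t^2 / 2))) (t, w)"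
    by (rule eventually_compose_filterlim)
  then have ev1: "\<forall>\<^sub>F t in at_right 0. -e < (?f (u + t *\<^sub>R w) - ?f u) / (t^2 / 2)"
    by simp
  define d where "d = (if ?a < 0 then - ?a / (\<bar>?b\<bar> + 1) else 1)"
  have bp: "\<bar>?b\<bar> + 1 > 0" by (simp add: add_nonneg_pos)
  have dpos: "d > 0" unfolding d_def using bp by (simp add: divide_neg_pos)
  have ev3: "\<forall>\<^sub>F t in at_right (0::real). t > 0 \<and> t < d"
    unfolding eventually_at_right_field using dpos by blast
  have "\<forall>\<^sub>F t in at_right (0::real). False"
    using ev1 expand_f[of s u w] ev3
  proof eventually_elim
    case (elim t)
    have tp: "t > 0" using elim by simp
    have t2: "t^2 / 2 > 0" using tp by simp
    have "(?f (u + t *\<^sub>R w) - ?f u) / (t^2 / 2) = (t * ?a + t^2 * ?b) / t^2"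
      using elim(2) by simp
    also have "\<dots> = ?a / t + ?b" using tp by (simp add: power2_eq_square add_divide_distrib)
    finally have r: "(?f (u + t *\<^sub>R w) - ?f u) / (t^2 / 2) = ?a / t + ?b" .
    from elim(1) have q: "-e < ?a / t + ?b" by (simp only: r)
    show False
    proof (cases "?a < 0")
      case True
      have "t * (\<bar>?b\<bar> + 1) < - ?a" using elim(3) True
        by (simp add: d_def field_simps)
      moreover have "t * ?b \<le> t * \<bar>?b\<bar>" using tp by (intro mult_left_mono) auto
      ultimately have "?a + t * ?b \<le> - t" by (simp add: algebra_simps)
      then have "(?a + t * ?b) / t \<le> -1" using tp by (simp add: divide_le_eq)
      then have "?a / t + ?b \<le> -1" using tp by (simp add: add_divide_distrib)
      then show False using q True by (simp add: e_def)
    next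
      case False
      then have "?a = 0" "?b < 0" using neg by auto
      then show False using q by (simp add: e_def)
    qed
  qed
  then show False by simp
qed

lemma DD_sym: "DD s u i j = DD s u j i"
  by (simp add: DD_def mult.commute)

lemma sum_if1: "(\<Sum>i\<in>(UNIV::'n::finite set). \<Sum>j\<in>(UNIV::'m::finite set). (if i = k then g j else (0::real))) = (\<Sum>j\<in>UNIV. g j)"
proof -
  have "(\<Sum>j\<in>(UNIV::'m set). (if i = k then g j else (0::real))) = (if i = k then (\<Sum>j\<in>UNIV. g j) else 0)" for i
    by simp
  then show ?thesis by (simp add: sum.delta)
qed

lemma sum_if2: "(\<Sum>i\<in>(UNIV::'n::finite set). \<Sum>j\<in>(UNIV::'n set). (if j = k then h i else (0::real))) = (\<Sum>i\<in>UNIV. h i)"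
  by (simp add: sum.delta')

lemma SA_axis:
  fixes s u :: "real^'n"
  shows "SA s u (axis k c) = 2 * (\<Sum>j\<in>UNIV. al (DD s u k j) (c * u$j))"
proof -
  have t: "al (DD s u i j) (u$i * (axis k c)$j + (axis k c)$i * u$j)
     = (if i = k then al (DD s u k j) (c * u$j) else 0) + (if j = k then al (DD s u k i) (c * u$i) else 0)"
    for i j
  proof (cases "i = k")
    case True
    then show ?thesis
    proof (cases "j = k")
      case True
      have "u$k * c + c * u$k = 2 * (c * u$k)" by simp
      then show ?thesis using \<open>i = k\<close> True by (simp add: axis_def al_def abs_mult)
    next
      case False
      then show ?thesis using \<open>i = k\<close> by (simp add: axis_def al_def mult.commute)
    qed
  next
    case False
    then show ?thesis
    proof (cases "j = k")
      case True
      then show ?thesis using \<open>i \<noteq> k\<close> by (simp add: axis_def al_def DD_sym[of s u k] mult.commute)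
    next
      case False
      then show ?thesis using \<open>i \<noteq> k\<close> by (simp add: axis_def al_def)
    qed
  qed
  have "SA s u (axis k c) = (\<Sum>i\<in>UNIV. \<Sum>j\<in>UNIV. (if i = k then al (DD s u k j) (c * u$j) else 0) + (if j = k then al (DD s u k i) (c * u$i) else 0))"
    unfolding SA_def t ..
  also have "\<dots> = (\<Sum>j\<in>UNIV. al (DD s u k j) (c * u$j)) + (\<Sum>i\<in>UNIV. al (DD s u k i) (c * u$i))"
    by (simp only: sum.distrib sum_if1 sum_if2)
  finally show ?thesis by simp
qed

lemma SB_axis:
  fixes s u :: "real^'n"
  shows "SB s u (axis k c) = be (DD s u k k) (2 * c * u$k) (c * c)"
proof -
  have t: "be (DD s u i j) (u$i * (axis k c)$j + (axis k c)$i * u$j) ((axis k c)$i * (axis k c)$j)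
     = (if i = k then (if j = k then be (DD s u k k) (2 * c * u$k) (c * c) else 0) else 0)" for i j
    by (cases "i = k"; cases "j = k") (simp_all add: axis_def be_def mult.assoc)
  show ?thesis unfolding SB_def t sum_if1
    by simp
qed



definition Hs :: "real \<Rightarrow> real \<Rightarrow> real" where
  "Hs \<sigma> x = (if x = 1 then 1 else \<sigma> * (if x > 1 then x else - x))"

lemma pair_term:
  fixes x Q :: real
  assumes "\<bar>x\<bar> \<le> Q" "Q > 1"
  shows "Hs (-1) x + Q * Hs 1 (x / Q) \<le> 0"
proof -
  have Qp: "Q > 0" using assms by simp
  consider "x = 1" | "x = Q" | "1 < x \<and> x < Q" | "x < 1" using assms by linarith
  then show ?thesis
  proof cases
    case 1
    have "1 / Q < 1" using assms by simp
    then show ?thesis using 1 Qp by (simp add: Hs_def)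
  next
    case 2
    then show ?thesis using assms by (simp add: Hs_def)
  next
    case 3
    then have "x / Q < 1" using Qp by (simp add: divide_less_eq)
    then show ?thesis using 3 Qp by (simp add: Hs_def)
  next
    case 4
    then have "x / Q < 1" using Qp assms by (simp add: divide_less_eq)
    then show ?thesis using 4 Qp by (simp add: Hs_def)
  qed
qed

lemma combi:
  fixes p m :: "'n::finite \<Rightarrow> real"
  assumes p0: "\<And>j. p j \<ge> 0"
    and SH: "\<And>k. p k > 0 \<Longrightarrow> 0 \<le> (\<Sum>j\<in>UNIV. p j * Hs (-1) (m k * m j)) \<and>
               (m k ^ 2 \<le> 1 \<longrightarrow> 0 < (\<Sum>j\<in>UNIV. p j * Hs (-1) (m k * m j)))"
    and GR: "\<And>k. p k > 0 \<Longrightarrow> 0 \<le> (\<Sum>j\<in>UNIV. p j * Hs 1 (m k * m j)) \<and>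
               (m k ^ 2 < 1 \<longrightarrow> 0 < (\<Sum>j\<in>UNIV. p j * Hs 1 (m k * m j)))"
  shows "(\<forall>j. p j > 0 \<longrightarrow> m j = 1) \<or> (\<forall>j. p j > 0 \<longrightarrow> m j = -1)"
proof (cases "\<exists>j. p j > 0")
  case False
  then show ?thesis by auto
next
  case True
  define K where "K = {j. p j > 0}"
  have Kne: "K \<noteq> {}" and Kfin: "finite K" using True by (auto simp: K_def)
  define R where "R = Max ((\<lambda>j. \<bar>m j\<bar>) ` K)"
  define r where "r = Min ((\<lambda>j. \<bar>m j\<bar>) ` K)"
  have "R \<in> (\<lambda>j. \<bar>m j\<bar>) ` K" unfolding R_def using Kne Kfin by (intro Max_in) auto
  then obtain k where kK: "k \<in> K" and Rk: "R = \<bar>m k\<bar>" by auto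
  have "r \<in> (\<lambda>j. \<bar>m j\<bar>) ` K" unfolding r_def using Kne Kfin by (intro Min_in) auto
  then obtain j0 where j0K: "j0 \<in> K" and rj0: "r = \<bar>m j0\<bar>" by auto
  have Rge: "\<bar>m j\<bar> \<le> R" if "j \<in> K" for j
    unfolding R_def using Kfin that by (intro Max_ge) auto
  have rle: "r \<le> \<bar>m j\<bar>" if "j \<in> K" for j
    unfolding r_def using Kfin that by (intro Min_le) auto
  have r0: "r \<ge> 0" using rj0 by simp
  have rR: "r \<le> R" using rle[OF kK] Rk by simp
  have pK: "p j > 0" if "j \<in> K" for j using that by (simp add: K_def)
  have pnK: "p j = 0" if "j \<notin> K" for j using that p0[of j] by (simp add: K_def)
  have stepa: "r * R \<ge> 1"
  proof (rule ccontr)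
    assume "\<not> r * R \<ge> 1"
    then have lt: "r * R < 1" by simp
    have r2: "m j0 ^ 2 < 1"
    proof -
      have "r * r \<le> r * R" using rR r0 by (simp add: mult_left_mono)
      moreover have "r * r = m j0 * m j0" using rj0 abs_mult_self_eq[of "m j0"] by simp
      ultimately show ?thesis using lt by (simp add: power2_eq_square)
    qed
    have small: "m j0 * m j < 1" if "j \<in> K" for j
    proof -
      have "\<bar>m j0 * m j\<bar> = r * \<bar>m j\<bar>" using rj0 by (simp add: abs_mult)
      also have "\<dots> \<le> r * R" using Rge[OF that] r0 by (simp add: mult_left_mono)
      finally show ?thesis using lt by linarith
    qed
    have tm: "p j * Hs \<sigma> (m j0 * m j) = \<sigma> * (- (p j * (m j0 * m j)))" for \<sigma> j
    proof (cases "j \<in> K")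
      case True
      then show ?thesis using small[OF True] by (simp add: Hs_def)
    next
      case False
      then show ?thesis using pnK by simp
    qed
    have "0 < (\<Sum>j\<in>UNIV. p j * Hs (-1) (m j0 * m j))" using SH[OF pK[OF j0K]] r2 by simp
    moreover have "0 < (\<Sum>j\<in>UNIV. p j * Hs 1 (m j0 * m j))" using GR[OF pK[OF j0K]] r2 by simp
    ultimately show False unfolding tm by (simp add: sum_negf)
  qed
  have stepb: "R \<le> 1"
  proof (rule ccontr)
    assume "\<not> R \<le> 1"
    then have R1: "R > 1" by simp
    have "\<exists>j1\<in>K. m k * m j1 = 1"
    proof (rule ccontr)
      assume nex: "\<not> (\<exists>j1\<in>K. m k * m j1 = 1)"
      have tnp: "p j * Hs (-1) (m k * m j) \<le> 0" for j
      proof (cases "j \<in> K")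
        case True
        have "\<bar>m k * m j\<bar> \<ge> 1"
        proof -
          have "R * r \<le> R * \<bar>m j\<bar>" using rle[OF True] R1 by (simp add: mult_left_mono)
          then show ?thesis using stepa Rk by (simp add: abs_mult mult.commute)
        qed
        moreover have "m k * m j \<noteq> 1" using nex True by auto
        ultimately have "Hs (-1) (m k * m j) \<le> 0" by (auto simp: Hs_def)
        then show ?thesis using p0[of j] by (simp add: mult_nonneg_nonpos)
      next
        case False
        then show ?thesis using pnK by simp
      qed
      have tk: "p k * Hs (-1) (m k * m k) < 0"
      proof -
        have "m k * m k = R * R" using Rk abs_mult_self_eq[of "m k"] by simp
        moreover have "R * R > 1" using R1 by (simp add: one_less_power[of R 2, simplified power2_eq_square])
        ultimately have "Hs (-1) (m k * m k) < 0" by (simp add: Hs_def)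
        then show ?thesis using pK[OF kK] by (simp add: mult_pos_neg)
      qed
      have "(\<Sum>j\<in>UNIV. p j * Hs (-1) (m k * m j)) = p k * Hs (-1) (m k * m k) + (\<Sum>j\<in>UNIV - {k}. p j * Hs (-1) (m k * m j))"
        by (simp add: sum.remove)
      also have "\<dots> < 0" using tk sum_nonpos[of "UNIV - {k}" "\<lambda>j. p j * Hs (-1) (m k * m j)"] tnp by simp
      finally show False using SH[OF pK[OF kK]] by simp
    qed
    then obtain j1 where j1K: "j1 \<in> K" and kj1: "m k * m j1 = 1" by blast
    have mk0: "m k \<noteq> 0" using kj1 by auto
    have mj1: "m j1 = 1 / m k" using kj1 mk0 by (simp add: field_simps)
    have Q: "m k * m k = R * R" using Rk abs_mult_self_eq[of "m k"] by simp
    have RR1: "R * R > 1" using R1 by (simp add: one_less_power[of R 2, simplified power2_eq_square])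
    have j1sq: "m j1 ^ 2 < 1"
    proof -
      have "m j1 ^ 2 = 1 / (R * R)" using mj1 Q by (simp add: power2_eq_square)
      then show ?thesis using RR1 by simp
    qed
    have gr: "0 < (\<Sum>j\<in>UNIV. p j * Hs 1 (m j1 * m j))" using GR[OF pK[OF j1K]] j1sq by simp
    have sh: "0 \<le> (\<Sum>j\<in>UNIV. p j * Hs (-1) (m k * m j))" using SH[OF pK[OF kK]] by simp
    have tm: "p j * Hs (-1) (m k * m j) + (R * R) * (p j * Hs 1 (m j1 * m j)) \<le> 0" for j
    proof (cases "j \<in> K")
      case True
      have "\<bar>m k * m j\<bar> = R * \<bar>m j\<bar>" using Rk by (simp add: abs_mult)
      also have "\<dots> \<le> R * R" using Rge[OF True] R1 by (simp add: mult_left_mono)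
      finally have "\<bar>m k * m j\<bar> \<le> R * R" .
      from pair_term[OF this RR1]
      have "Hs (-1) (m k * m j) + R * R * Hs 1 (m k * m j / (R * R)) \<le> 0" .
      moreover have "m k * m j / (R * R) = m j1 * m j" unfolding mj1 Q[symmetric] using mk0 by (simp add: field_simps)
      ultimately have "Hs (-1) (m k * m j) + R * R * Hs 1 (m j1 * m j) \<le> 0" by simp
      then have "p j * (Hs (-1) (m k * m j) + R * R * Hs 1 (m j1 * m j)) \<le> 0"
        using p0[of j] by (simp add: mult_nonneg_nonpos)
      then show ?thesis by (simp add: algebra_simps)
    next
      case False
      then show ?thesis using pnK by simp
    qed
    have "(\<Sum>j\<in>UNIV. p j * Hs (-1) (m k * m j)) + (R * R) * (\<Sum>j\<in>UNIV. p j * Hs 1 (m j1 * m j)) \<le> 0"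
      using sum_nonpos[of UNIV, OF tm] by (simp add: sum.distrib sum_distrib_left)
    moreover have "(R * R) * (\<Sum>j\<in>UNIV. p j * Hs 1 (m j1 * m j)) > 0" using gr RR1 by simp
    ultimately show False using sh by linarith
  qed
  have R0: "R \<ge> 0" using Rk by simp
  have "r * R \<le> 1 * R" using rR stepb R0 by (intro mult_right_mono) auto
  then have R1: "R = 1" using stepa stepb by simp
  then have r1: "r = 1" using stepa rR by simp
  have pm: "m j = 1 \<or> m j = -1" if "j \<in> K" for j
    using Rge[OF that] rle[OF that] R1 r1 by linarith
  show ?thesis
  proof (rule ccontr)
    assume "\<not> ?thesis"
    then obtain k1 k2 where k1: "p k1 > 0" "m k1 \<noteq> 1" and k2: "p k2 > 0" "m k2 \<noteq> -1" by auto
    have "m k1 = -1" using pm[of k1] k1 by (auto simp: K_def)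
    have "m k2 = 1" using pm[of k2] k2 by (auto simp: K_def)
    have s1: "0 < (\<Sum>j\<in>UNIV. p j * Hs (-1) (m k1 * m j))" using SH[OF k1(1)] \<open>m k1 = -1\<close> by simp
    have s2: "0 < (\<Sum>j\<in>UNIV. p j * Hs (-1) (m k2 * m j))" using SH[OF k2(1)] \<open>m k2 = 1\<close> by simp
    have tm: "p j * Hs (-1) (m k1 * m j) + p j * Hs (-1) (m k2 * m j) = 0" for j
    proof (cases "j \<in> K")
      case True
      then show ?thesis using pm[OF True] \<open>m k1 = -1\<close> \<open>m k2 = 1\<close> by (auto simp: Hs_def)
    next
      case False
      then show ?thesis using pnK by simp
    qed
    have "(\<Sum>j\<in>UNIV. p j * Hs (-1) (m k1 * m j)) + (\<Sum>j\<in>UNIV. p j * Hs (-1) (m k2 * m j)) = 0"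
      by (simp only: sum.distrib[symmetric] tm sum.neutral_const)
    then show False using s1 s2 by simp
  qed
qed



lemma key_sgn:
  fixes P x :: real
  assumes "P \<noteq> 0" "x \<noteq> 1"
  shows "sgn (P * (x - 1)) * (P * x) = \<bar>P\<bar> * (if x > 1 then x else - x)"
proof -
  have e: "sgn (P * (x - 1)) * (P * x) = (sgn P * P) * (sgn (x - 1) * x)"
    by (simp add: sgn_mult)
  have a: "sgn P * P = \<bar>P\<bar>" by (simp add: sgn_mult_abs abs_sgn)
  have b: "sgn (x - 1) * x = (if x > 1 then x else - x)" using assms(2) by (auto simp: sgn_if)
  show ?thesis unfolding e a b ..
qed

lemma term_gen:
  fixes uk sk uj sj \<sigma> :: real
  assumes sk: "sk \<noteq> 0" and uk: "uk \<noteq> 0" and z: "sj = 0 \<Longrightarrow> uj = 0" and sig: "\<sigma> = 1 \<or> \<sigma> = -1"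
  shows "\<bar>uk\<bar> * al (uk * uj - sk * sj) (\<sigma> * sgn uk * uj) = \<bar>sk\<bar> * (\<bar>sj\<bar> * Hs \<sigma> ((uk / sk) * (uj / sj)))"
proof (cases "sj = 0")
  case True
  then show ?thesis using z by (simp add: al_def)
next
  case False
  define x where "x = (uk / sk) * (uj / sj)"
  define P where "P = sk * sj"
  have P0: "P \<noteq> 0" using False sk by (simp add: P_def)
  have uu: "uk * uj = P * x" unfolding x_def P_def using False sk by (simp add: field_simps)
  have D: "uk * uj - sk * sj = P * (x - 1)" using uu by (simp add: P_def algebra_simps)
  have sabs: "\<bar>\<sigma>\<bar> = 1" using sig by auto
  show ?thesis
  proof (cases "x = 1")
    case True
    have "\<bar>uk\<bar> * al (uk * uj - sk * sj) (\<sigma> * sgn uk * uj) = \<bar>uk\<bar> * \<bar>uj\<bar>"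
      using True D by (simp add: al_def abs_mult sabs abs_sgn_eq uk)
    also have "\<dots> = \<bar>sk\<bar> * \<bar>sj\<bar>" using uu True by (metis abs_mult mult_1_right P_def)
    finally show ?thesis unfolding x_def[symmetric] using True by (simp add: Hs_def)
  next
    case False
    have "\<bar>uk\<bar> * al (uk * uj - sk * sj) (\<sigma> * sgn uk * uj) = \<sigma> * (sgn (P * (x - 1)) * (uk * uj))"
    proof -
      have "P * (x - 1) \<noteq> 0" using P0 False by simp
      then have "\<bar>uk\<bar> * al (uk * uj - sk * sj) (\<sigma> * sgn uk * uj) = \<bar>uk\<bar> * (sgn (P * (x - 1)) * (\<sigma> * sgn uk * uj))"
        unfolding D al_def by simp
      also have "\<dots> = \<sigma> * (sgn (P * (x - 1)) * ((sgn uk * \<bar>uk\<bar>) * uj))" by (simp add: algebra_simps)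
      also have "sgn uk * \<bar>uk\<bar> = uk" by (simp add: sgn_mult_abs)
      finally show ?thesis by simp
    qed
    also have "\<dots> = \<sigma> * (\<bar>P\<bar> * (if x > 1 then x else - x))" unfolding uu using key_sgn[OF P0 False] by simp
    also have "\<dots> = \<bar>sk\<bar> * (\<bar>sj\<bar> * Hs \<sigma> x)" using False by (simp add: Hs_def P_def abs_mult)
    finally show ?thesis unfolding x_def[symmetric] .
  qed
qed

lemma coord:
  fixes s u :: "real^'n"
  assumes st: "second_order_stationary (rank1_l1_obj s) u"
  shows "0 \<le> (\<Sum>j\<in>UNIV. al (DD s u k j) (c * u$j)) \<and>
    ((\<Sum>j\<in>UNIV. al (DD s u k j) (c * u$j)) = 0 \<longrightarrow> 0 \<le> be (DD s u k k) (2 * c * u$k) (c * c))"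
  using stat_cond[OF st, of "axis k c"] by (simp add: SA_axis SB_axis)

lemma Z0:
  fixes s u :: "real^'n"
  assumes st: "second_order_stationary (rank1_l1_obj s) u" and sk: "s$k = 0"
  shows "u$k = 0"
proof (rule ccontr)
  assume uk: "u$k \<noteq> 0"
  define c where "c = - sgn (u$k)"
  have ss: "sgn (u$k) * sgn (u$k) = 1" using uk by (simp add: sgn_if)
  have t: "al (DD s u k j) (c * u$j) = - \<bar>u$j\<bar>" for j
  proof (cases "u$j = 0")
    case True
    then show ?thesis by (simp add: al_def DD_def sk)
  next
    case False
    have "DD s u k j \<noteq> 0" using False uk sk by (simp add: DD_def)
    then have "al (DD s u k j) (c * u$j) = sgn (u$k * u$j) * (c * u$j)"
      by (simp add: al_def DD_def sk)
    also have "\<dots> = - ((sgn (u$k) * sgn (u$k)) * (sgn (u$j) * u$j))"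
      by (simp add: c_def sgn_mult algebra_simps)
    also have "sgn (u$j) * u$j = \<bar>u$j\<bar>" by (auto simp: sgn_if)
    finally show ?thesis using ss by simp
  qed
  have "\<bar>u$k\<bar> \<le> (\<Sum>j\<in>UNIV. \<bar>u$j\<bar>)" by (rule member_le_sum) auto
  then have "(\<Sum>j\<in>UNIV. al (DD s u k j) (c * u$j)) < 0" using uk unfolding t by (simp add: sum_negf)
  then show False using coord[OF st, of k c] by simp
qed

lemma Z1:
  fixes s u :: "real^'n"
  assumes st: "second_order_stationary (rank1_l1_obj s) u" and sk: "s$k \<noteq> 0"
  shows "u$k \<noteq> 0"
proof
  assume uk: "u$k = 0"
  have t: "al (DD s u k j) (c * u$j) = c * al (DD s u k j) (u$j)" if "c = 1 \<or> c = -1" for c j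
  proof (cases "DD s u k j = 0")
    case True
    then have "s$j = 0" using uk sk by (simp add: DD_def)
    then have "u$j = 0" using Z0[OF st] by simp
    then show ?thesis by (simp add: al_def)
  next
    case False
    then show ?thesis by (simp add: al_def)
  qed
  define X where "X = (\<Sum>j\<in>UNIV. al (DD s u k j) (u$j))"
  have c1: "0 \<le> X \<and> (X = 0 \<longrightarrow> 0 \<le> be (DD s u k k) (2 * 1 * u$k) (1 * 1))"
    using coord[OF st, of k 1] t[of 1] by (simp add: X_def)
  have c2: "0 \<le> - X"
    using coord[OF st, of k "-1"] t[of "-1"] by (simp add: X_def sum_negf)
  have "DD s u k k < 0" using uk sk by (simp add: DD_def) (metis not_real_square_gt_zero)
  then have "be (DD s u k k) (2 * 1 * u$k) (1 * 1) < 0" by (simp add: be_def)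
  then show False using c1 c2 by simp
qed

definition mu :: "real^'n \<Rightarrow> real^'n \<Rightarrow> 'n \<Rightarrow> real" where
  "mu s u j = u$j / s$j"

lemma SHGR:
  fixes s u :: "real^'n"
  assumes st: "second_order_stationary (rank1_l1_obj s) u" and sk: "s$k \<noteq> 0"
    and sig: "\<sigma> = 1 \<or> \<sigma> = -1"
  shows "0 \<le> (\<Sum>j\<in>UNIV. \<bar>s$j\<bar> * Hs \<sigma> (mu s u k * mu s u j)) \<and>
    ((\<Sum>j\<in>UNIV. \<bar>s$j\<bar> * Hs \<sigma> (mu s u k * mu s u j)) = 0 \<longrightarrow>
       0 \<le> be (DD s u k k) (2 * (\<sigma> * sgn (u$k)) * u$k) ((\<sigma> * sgn (u$k)) * (\<sigma> * sgn (u$k))))"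
proof -
  have uk: "u$k \<noteq> 0" using Z1[OF st sk] .
  define c where "c = \<sigma> * sgn (u$k)"
  define S where "S = (\<Sum>j\<in>UNIV. \<bar>s$j\<bar> * Hs \<sigma> (mu s u k * mu s u j))"
  have t: "\<bar>u$k\<bar> * al (DD s u k j) (c * u$j) = \<bar>s$k\<bar> * (\<bar>s$j\<bar> * Hs \<sigma> (mu s u k * mu s u j))" for j
    unfolding DD_def mu_def c_def
    by (rule term_gen[OF sk uk _ sig]) (use Z0[OF st] in auto)
  have "\<bar>u$k\<bar> * (\<Sum>j\<in>UNIV. al (DD s u k j) (c * u$j)) = \<bar>s$k\<bar> * S"
    unfolding sum_distrib_left t S_def ..
  then have eq: "(\<Sum>j\<in>UNIV. al (DD s u k j) (c * u$j)) = (\<bar>s$k\<bar> / \<bar>u$k\<bar>) * S"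
    using uk by (simp add: field_simps)
  have fp: "\<bar>s$k\<bar> / \<bar>u$k\<bar> > 0" using uk sk by simp
  have "0 \<le> (\<bar>s$k\<bar> / \<bar>u$k\<bar>) * S \<and> ((\<bar>s$k\<bar> / \<bar>u$k\<bar>) * S = 0 \<longrightarrow> 0 \<le> be (DD s u k k) (2 * c * u$k) (c * c))"
    using coord[OF st, of k c] unfolding eq .
  then show ?thesis using fp uk sk unfolding S_def[symmetric] c_def
    by (simp add: zero_le_mult_iff)
qed

lemma be_neg_SH:
  fixes uk sk :: real
  assumes uk: "uk \<noteq> 0" and sk: "sk \<noteq> 0" and le: "(uk / sk)^2 \<le> 1"
  shows "be (uk * uk - sk * sk) (2 * (-1 * sgn uk) * uk) ((-1 * sgn uk) * (-1 * sgn uk)) < 0"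
proof -
  have s2: "sk^2 > 0" using sk by simp
  have "uk^2 / sk^2 \<le> 1" using le by (simp add: power_divide)
  then have "uk^2 \<le> sk^2" using s2 by (simp add: divide_le_eq_1)
  then have D: "uk * uk - sk * sk \<le> 0" by (simp add: power2_eq_square)
  have cc: "(-1 * sgn uk) * (-1 * sgn uk) = 1" using uk by (simp add: sgn_if)
  have a: "2 * (-1 * sgn uk) * uk < 0" using uk by (auto simp: sgn_if)
  show ?thesis
  proof (cases "uk * uk - sk * sk = 0")
    case True
    then show ?thesis using a cc uk by (simp add: be_def sgn_if)
  next
    case False
    then have "uk * uk - sk * sk < 0" using D by simp
    then show ?thesis using cc by (simp add: be_def)
  qed
qed

lemma be_neg_GR:
  fixes uk sk :: real
  assumes uk: "uk \<noteq> 0" and sk: "sk \<noteq> 0" and lt: "(uk / sk)^2 < 1"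
  shows "be (uk * uk - sk * sk) (2 * (1 * sgn uk) * uk) ((1 * sgn uk) * (1 * sgn uk)) < 0"
proof -
  have s2: "sk^2 > 0" using sk by simp
  have "uk^2 / sk^2 < 1" using lt by (simp add: power_divide)
  then have "uk^2 < sk^2" using s2 by (simp add: divide_less_eq_1)
  then have D: "uk * uk - sk * sk < 0" by (simp add: power2_eq_square)
  have cc: "(1 * sgn uk) * (1 * sgn uk) = 1" using uk by (simp add: sgn_if)
  show ?thesis using D cc by (simp add: be_def)
qed

theorem corollary2:
  fixes ustar u :: "real^'n"
  assumes "second_order_stationary (rank1_l1_obj ustar) u"
  shows "\<forall>y. rank1_l1_obj ustar u \<le> rank1_l1_obj ustar y"
proof -
  note st = assms
  let ?s = ustar
  define p where "p j = \<bar>?s$j\<bar>" for j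
  define m where "m j = mu ?s u j" for j
  have SH: "0 \<le> (\<Sum>j\<in>UNIV. p j * Hs (-1) (m k * m j)) \<and>
               (m k ^ 2 \<le> 1 \<longrightarrow> 0 < (\<Sum>j\<in>UNIV. p j * Hs (-1) (m k * m j)))" if "p k > 0" for k
  proof -
    have sk: "?s$k \<noteq> 0" using that by (simp add: p_def)
    have uk: "u$k \<noteq> 0" using Z1[OF st sk] .
    from SHGR[OF st sk, of "-1"] have h: "0 \<le> (\<Sum>j\<in>UNIV. p j * Hs (-1) (m k * m j)) \<and>
      ((\<Sum>j\<in>UNIV. p j * Hs (-1) (m k * m j)) = 0 \<longrightarrow>
       0 \<le> be (u$k * u$k - ?s$k * ?s$k) (2 * (-1 * sgn (u$k)) * u$k) ((-1 * sgn (u$k)) * (-1 * sgn (u$k))))"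
      by (simp add: p_def m_def DD_def)
    show ?thesis using h be_neg_SH[OF uk sk] by (auto simp: m_def mu_def)
  qed
  have GR: "0 \<le> (\<Sum>j\<in>UNIV. p j * Hs 1 (m k * m j)) \<and>
               (m k ^ 2 < 1 \<longrightarrow> 0 < (\<Sum>j\<in>UNIV. p j * Hs 1 (m k * m j)))" if "p k > 0" for k
  proof -
    have sk: "?s$k \<noteq> 0" using that by (simp add: p_def)
    have uk: "u$k \<noteq> 0" using Z1[OF st sk] .
    from SHGR[OF st sk, of "1"] have h: "0 \<le> (\<Sum>j\<in>UNIV. p j * Hs 1 (m k * m j)) \<and>
      ((\<Sum>j\<in>UNIV. p j * Hs 1 (m k * m j)) = 0 \<longrightarrow>
       0 \<le> be (u$k * u$k - ?s$k * ?s$k) (2 * (1 * sgn (u$k)) * u$k) ((1 * sgn (u$k)) * (1 * sgn (u$k))))"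
      by (simp add: p_def m_def DD_def)
    show ?thesis using h be_neg_GR[OF uk sk] by (auto simp: m_def mu_def)
  qed
  have p0: "p j \<ge> 0" for j by (simp add: p_def)
  have cases: "(\<forall>j. p j > 0 \<longrightarrow> m j = 1) \<or> (\<forall>j. p j > 0 \<longrightarrow> m j = -1)"
    by (rule combi[OF p0 SH GR])
  then obtain \<epsilon> :: real where eps: "\<epsilon> * \<epsilon> = 1" and me: "\<And>j. p j > 0 \<Longrightarrow> m j = \<epsilon>"
    by (metis mult_1_right mult_minus1_right minus_minus)
  have ue: "u$j = \<epsilon> * ?s$j" for j
  proof (cases "?s$j = 0")
    case True
    then show ?thesis using Z0[OF st True] by simp
  next
    case False
    then have "m j = \<epsilon>" using me by (simp add: p_def)
    then show ?thesis using False by (simp add: m_def mu_def field_simps)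
  qed
  have "u$i * u$j - ?s$i * ?s$j = 0" for i j
    unfolding ue using eps by (simp add: algebra_simps)
  then have f0: "rank1_l1_obj ?s u = 0" by (simp add: rank1_l1_obj_def)
  have "rank1_l1_obj ?s y \<ge> 0" for y by (simp add: rank1_l1_obj_def sum_nonneg)
  then show ?thesis using f0 by simp
qed

end
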